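(* If $p_4,p_5\in\mathbb H^2_{\mathbb C}$ are distinct points, then there exist $p_1\in\mathrm EV$ and $p_2,p_3\in\mathbb H^2_{\mathbb C}$ such that $R^{p_5}R^{p_4}R^{p_3}R^{p_2}R^{p_1}=\omega^2$ in $\mathrm{SU}(2,1)$.
   Context: $V=\mathbb C^3$ with Hermitian form of signature $(-,+,+)$; $\mathbb H^2_{\mathbb C}$ is the set of negative points ($\langle p,p\rangle<0$) of $\mathbb PV$ and $\mathrm EV$ the set of positive points. $\mathrm{SU}(2,1)$ is the group of determinant-one form-preserving linear maps; $\omega=e^{2\pi i/3}$. For nonisotropic $p$, $R^px=2\frac{\langle x,p\rangle}{\langle p,p\rangle}p-x$. *)

theory Defs
  imports "HOL-Analysis.Analysis"
begin

definition herm :: "complex^3 \<Rightarrow> complex^3 \<Rightarrow> complex" where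
  "herm x y = - (x$1 * cnj (y$1)) + x$2 * cnj (y$2) + x$3 * cnj (y$3)"

text \<open>Negative points (complex hyperbolic plane) and positive points, via representatives.\<close>
definition negative :: "complex^3 \<Rightarrow> bool" where
  "negative p \<longleftrightarrow> Re (herm p p) < 0"

definition positive :: "complex^3 \<Rightarrow> bool" where
  "positive p \<longleftrightarrow> Re (herm p p) > 0"

text \<open>Two nonzero vectors represent the same point of PV iff they are proportional.\<close>
definition same_point :: "complex^3 \<Rightarrow> complex^3 \<Rightarrow> bool" where
  "same_point p q \<longleftrightarrow> (\<exists>c::complex. q = c *s p)"

definition refl :: "complex^3 \<Rightarrow> complex^3 \<Rightarrow> complex^3" where
  "refl p x = (2 * herm x p / herm p p) *s p - x"

definition omega :: complex where
  "omega = exp (2 * pi * \<i> / 3)"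

end

theory Submission
  imports Defs
begin


lemma herm_add_left: "herm (x + y) z = herm x z + herm y z"
  unfolding herm_def by (simp add: algebra_simps)
lemma herm_add_right: "herm z (x + y) = herm z x + herm z y"
  unfolding herm_def by (simp add: algebra_simps)
lemma herm_diff_left: "herm (x - y) z = herm x z - herm y z"
  unfolding herm_def by (simp add: algebra_simps)
lemma herm_diff_right: "herm z (x - y) = herm z x - herm z y"
  unfolding herm_def by (simp add: algebra_simps)
lemma herm_minus_left: "herm (- x) z = - herm x z"
  unfolding herm_def by (simp add: algebra_simps)
lemma herm_scale_left: "herm (k *s x) z = k * herm x z"
  unfolding herm_def by (simp add: algebra_simps)
lemma herm_scale_right: "herm z (k *s x) = cnj k * herm z x"
  unfolding herm_def by (simp add: algebra_simps)
lemma herm_swap: "herm y x = cnj (herm x y)"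
  unfolding herm_def by (simp add: algebra_simps)
lemma herm_self_real: "cnj (herm x x) = herm x x"
  using herm_swap[of x x] by simp
lemma herm_self_ofreal: "herm x x = complex_of_real (Re (herm x x))"
  by (simp add: herm_def complex_eq_iff)

lemmas herm_simps = herm_add_left herm_add_right herm_diff_left herm_diff_right
  herm_minus_left herm_scale_left herm_scale_right

lemma refl_add: "refl p (x + y) = refl p x + refl p y"
  unfolding refl_def by (simp add: herm_add_left vec_eq_iff add_divide_distrib algebra_simps)
lemma refl_scale: "refl p (k *s x) = k *s refl p x"
  unfolding refl_def by (simp add: herm_scale_left vec_eq_iff algebra_simps)
lemma refl_invol: assumes "herm p p \<noteq> 0" shows "refl p (refl p x) = x"
proof -
  have "herm (refl p x) p = herm x p"
    unfolding refl_def using assms by (simp add: herm_simps)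
  then show ?thesis unfolding refl_def[of p "refl p x"] by (simp add: refl_def vec_eq_iff)
qed
lemma refl_smult_point: assumes "k \<noteq> 0" shows "refl (k *s p) x = refl p x"
proof -
  have "cnj k \<noteq> 0" using assms by simp
  then show ?thesis unfolding refl_def using assms
    by (simp add: herm_simps vec_eq_iff field_simps)
qed


lemma smult_cancel: "(g::complex) \<noteq> 0 \<Longrightarrow> g *s x = g *s y \<Longrightarrow> x = y" by simp

lemma R32:
  assumes zaa: "herm za za = 0" and zbb: "herm zb zb = 0" and r: "herm za (g *s zb) = r"
    and rr: "cnj r = r" and r0: "r \<noteq> 0" and AA: "cnj A = A" and A0: "A \<noteq> 0" and g0: "g \<noteq> 0"
  shows "refl (A *s za + g *s zb) (refl (za + g *s zb) za) = A *s za"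
    and "refl (A *s za + g *s zb) (refl (za + g *s zb) zb) = (1/A) *s zb"
    and "herm s za = 0 \<Longrightarrow> herm s zb = 0 \<Longrightarrow> refl (A *s za + g *s zb) (refl (za + g *s zb) s) = s"
proof -
  define Z where "Z = g *s zb"
  have ZZ: "herm Z Z = 0" unfolding Z_def by (simp add: herm_simps zbb)
  have Zza: "herm Z za = r" using r rr unfolding Z_def by (metis herm_swap)
  have zaZ: "herm za Z = r" using r unfolding Z_def by simp
  have p2p2: "herm (za + Z) (za + Z) = 2 * r" by (simp add: herm_simps zaa ZZ Zza zaZ)
  have p3p3: "herm (A *s za + Z) (A *s za + Z) = 2 * A * r" by (simp add: herm_simps zaa ZZ Zza zaZ AA)
  have a1: "refl (za + Z) za = Z"
    unfolding refl_def using r0 by (simp add: herm_simps zaa zaZ ZZ Zza AA vec_eq_iff field_simps)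
  have a2: "refl (A *s za + Z) Z = A *s za"
    unfolding refl_def using r0 A0 by (simp add: herm_simps zaa zaZ ZZ Zza AA vec_eq_iff field_simps)
  have a3: "refl (za + Z) Z = za"
    unfolding refl_def using r0 by (simp add: herm_simps zaa zaZ ZZ Zza AA vec_eq_iff field_simps)
  have a4: "refl (A *s za + Z) za = (1/A) *s Z"
    unfolding refl_def using r0 A0 by (simp add: herm_simps zaa zaZ ZZ Zza AA vec_eq_iff field_simps)
  show "refl (A *s za + g *s zb) (refl (za + g *s zb) za) = A *s za"
    using a1 a2 unfolding Z_def by simp
  have "refl (A *s za + Z) (refl (za + Z) Z) = (1/A) *s Z" using a3 a4 by simp
  then have "g *s refl (A *s za + Z) (refl (za + Z) zb) = g *s ((1/A) *s zb)"
    unfolding Z_def by (simp add: refl_scale vec_eq_iff mult.commute mult.left_commute)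
  then show "refl (A *s za + g *s zb) (refl (za + g *s zb) zb) = (1/A) *s zb"
    unfolding Z_def by (rule smult_cancel[OF g0])
  assume s1: "herm s za = 0" and s2: "herm s zb = 0"
  have "refl (za + Z) s = - s" unfolding refl_def Z_def by (simp add: herm_simps s1 s2)
  moreover have "refl (A *s za + Z) (- s) = s" unfolding refl_def Z_def by (simp add: herm_simps s1 s2)
  ultimately show "refl (A *s za + g *s zb) (refl (za + g *s zb) s) = s" unfolding Z_def by simp
qed


lemma omega_alt: "omega = Complex (-1/2) (sqrt 3 / 2)"
proof -
  have e: "2 * pi / 3 = pi - pi/3" by simp
  have c: "cos (2*pi/3) = - 1/2" unfolding e cos_diff by (simp add: cos_60 sin_60)
  have s: "sin (2*pi/3) = sqrt 3 / 2" unfolding e sin_diff by (simp add: cos_60 sin_60)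
  have "omega = exp (\<i> * complex_of_real (2*pi/3))" unfolding omega_def by (simp add: field_simps)
  also have "\<dots> = Complex (cos (2*pi/3)) (sin (2*pi/3))" by (simp add: exp_eq_polar cis_conv_exp[symmetric] cis.ctr)
  finally show ?thesis using c s by simp
qed

lemma omega_sq: "omega^2 = - 1 - omega"
  unfolding omega_alt by (simp add: complex_eq_iff power2_eq_square field_simps)
lemma cnj_omega: "cnj omega = - 1 - omega"
  unfolding omega_alt by (simp add: complex_eq_iff)
lemma omega_rel: "omega^2 + omega + 1 = 0" using omega_sq by simp

definition u0 :: "complex^3" where "u0 = vector [1, 0, 0]"
definition v0 :: "complex \<Rightarrow> complex^3" where "v0 A = vector [1 + A, 1 - A, 0]"
definition p1v :: "complex \<Rightarrow> complex^3" where "p1v A = vector [((2 + 1 * omega) + (1 + 1 * omega) * A + (1 + 2 * omega) * A^2), (((-2) + 1 * omega) + (1 + 1 * omega) * A + (1 + (-2) * omega) * A^2), (2 * omega + (2 + 2 * omega) * A + 2 * A^2)]"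
definition zav :: "complex \<Rightarrow> complex^3" where "zav A = vector [(((-2) + (-3) * omega) + 2 * A + (-1) * omega * A^3), ((2 + 1 * omega) + (-2) * A + (-1) * omega * A^3), (2 + (-2) * omega * A + ((-2) + (-2) * omega) * A^2)]"
definition zbv :: "complex \<Rightarrow> complex^3" where "zbv A = vector [((2 + 2 * omega) + ((-2) + (-1) * omega) * A^2 + (1 + 1 * omega) * A^3 + (3 + 2 * omega) * A^4), (((-2) + (-2) * omega) + (2 + 3 * omega) * A^2 + (1 + 1 * omega) * A^3 + ((-1) + (-2) * omega) * A^4), (2 * omega * A + 2 * omega * A^2 + 2 * A^3 + 2 * A^4)]"
definition s0v :: "complex \<Rightarrow> complex^3" where "s0v A = vector [(((-2) + (-2) * omega) + ((-1) + (-1) * omega) * A + (2 + (-1) * omega) * A^2 + A^3), ((2 + 2 * omega) + ((-1) + (-1) * omega) * A + ((-2) + (-1) * omega) * A^2 + A^3), ((-2) * omega + (-2) * omega * A^3)]"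
definition p2v :: "complex \<Rightarrow> complex^3" where "p2v A = zav A + omega^2 *s zbv A"
definition p3v :: "complex \<Rightarrow> complex^3" where "p3v A = A *s zav A + omega^2 *s zbv A"

lemma om1: "omega * omega = -1 - omega" using omega_sq by (simp add: power2_eq_square)
lemma om2: "omega * (omega * x) = - x - omega * x" by (simp add: mult.assoc[symmetric] om1 algebra_simps)

lemmas mdefs = u0_def v0_def p1v_def zav_def zbv_def s0v_def

lemma vec3_eqI: "x$1 = y$1 \<Longrightarrow> x$2 = y$2 \<Longrightarrow> x$3 = (y::complex^3)$3 \<Longrightarrow> x = y"
  by (simp add: vec_eq_iff forall_3)

lemma refl_eqI: assumes "herm p p = n" "n \<noteq> 0" "herm y p = k" "(2*k) *s p = n *s (Y + y)"
  shows "refl p y = Y"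
proof -
  have "(2 * k / n) *s p = (1/n) *s ((2*k) *s p)" by (simp add: vec_eq_iff)
  also have "\<dots> = Y + y" using assms(2,4) by (simp add: vec_eq_iff field_simps)
  finally show ?thesis unfolding refl_def using assms(1,3) by (simp add: vec_eq_iff)
qed

lemma h_zaza: assumes AA: "cnj A = A" shows "herm (zav A) (zav A) = 0"
  unfolding herm_def mdefs by (simp add: cnj_omega AA algebra_simps eval_nat_numeral om1 om2)
lemma h_zbzb: assumes AA: "cnj A = A" shows "herm (zbv A) (zbv A) = 0"
  unfolding herm_def mdefs by (simp add: cnj_omega AA algebra_simps eval_nat_numeral om1 om2)
lemma h_s0za: assumes AA: "cnj A = A" shows "herm (s0v A) (zav A) = 0"
  unfolding herm_def mdefs by (simp add: cnj_omega AA algebra_simps eval_nat_numeral om1 om2)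
lemma h_s0zb: assumes AA: "cnj A = A" shows "herm (s0v A) (zbv A) = 0"
  unfolding herm_def mdefs by (simp add: cnj_omega AA algebra_simps eval_nat_numeral om1 om2)
lemma h_zazb: assumes AA: "cnj A = A" shows "herm (zav A) (zbv A) = 4 * (1 + omega) * (A - 1)^4 * (A + 1)^3"
  unfolding herm_def mdefs by (simp add: cnj_omega AA algebra_simps eval_nat_numeral om1 om2)
lemma h_s0s0: assumes AA: "cnj A = A" shows "herm (s0v A) (s0v A) = 4 * (A - 1)^4 * (A + 1)^2"
  unfolding herm_def mdefs by (simp add: cnj_omega AA algebra_simps eval_nat_numeral om1 om2)
lemma h_p1p1: assumes AA: "cnj A = A" shows "herm (p1v A) (p1v A) = 8 * (1 - A^2)^2"
  unfolding herm_def mdefs by (simp add: cnj_omega AA algebra_simps eval_nat_numeral om1 om2)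
lemma h_v0v0: "herm (v0 A) (v0 A) = - 4 * A" if "cnj A = A"
  unfolding herm_def mdefs using that by (simp add: algebra_simps power2_eq_square)
lemma h_u0u0: "herm u0 u0 = - 1"
  unfolding herm_def mdefs by simp

lemma eig_s0: assumes AA: "cnj A = A" and A0: "A \<noteq> 0" and A1: "A \<noteq> 1" and A2: "A \<noteq> -1"
  shows "omega^2 *s refl u0 (refl (v0 A) (refl (p1v A) (s0v A))) = 1 *s s0v A"
proof -
  have n1: "8 * (1 - A^2)^2 \<noteq> 0" 
  proof -
    have "1 - A^2 = (1 - A) * (1 + A)" by (simp add: algebra_simps power2_eq_square)
    moreover have "1 - A \<noteq> 0" "1 + A \<noteq> 0" using A1 A2 by (auto simp: add_eq_0_iff)
    ultimately show ?thesis by simp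
  qed
  have k1: "herm (s0v A) (p1v A) = (((-4) + (-4) * omega) + 4 * A + (8 + 8 * omega) * A^2 + (-8) * A^3 + ((-4) + (-4) * omega) * A^4 + 4 * A^5)"
    unfolding herm_def mdefs by (simp add: cnj_omega AA algebra_simps eval_nat_numeral om1 om2)
  have Y1: "refl (p1v A) (s0v A) = vector [(1 + (3 + 1 * omega) * A + omega * A^2 + 2 * omega * A^3), (1 + ((-1) + 1 * omega) * A + omega * A^2 + (-2) * omega * A^3), ((2 + 2 * omega) + (2 + 2 * omega) * A^3)]"
    by (rule refl_eqI[OF h_p1p1[OF AA] n1 k1], rule vec3_eqI; simp add: mdefs algebra_simps eval_nat_numeral om1 om2)
  have k2: "herm (vector [(1 + (3 + 1 * omega) * A + omega * A^2 + 2 * omega * A^3), (1 + ((-1) + 1 * omega) * A + omega * A^2 + (-2) * omega * A^3), ((2 + 2 * omega) + (2 + 2 * omega) * A^3)]) (v0 A) = ((-6) * A + ((-2) + (-2) * omega) * A^2 + (-6) * omega * A^3)"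
    unfolding herm_def mdefs by (simp add: cnj_omega AA algebra_simps eval_nat_numeral om1 om2)
  have n2: "- 4 * A \<noteq> 0" using A0 by simp
  have Y2: "refl (v0 A) (vector [(1 + (3 + 1 * omega) * A + omega * A^2 + 2 * omega * A^3), (1 + ((-1) + 1 * omega) * A + omega * A^2 + (-2) * omega * A^3), ((2 + 2 * omega) + (2 + 2 * omega) * A^3)]) = vector [(2 + A + (1 + 3 * omega) * A^2 + omega * A^3), (2 + (-1) * A + ((-1) + 1 * omega) * A^2 + (-1) * omega * A^3), (((-2) + (-2) * omega) + ((-2) + (-2) * omega) * A^3)]"
    by (rule refl_eqI[OF h_v0v0[OF AA] n2 k2], rule vec3_eqI; use A0 in \<open>simp add: mdefs field_simps algebra_simps eval_nat_numeral om1 om2\<close>)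
  have k3: "herm (vector [(2 + A + (1 + 3 * omega) * A^2 + omega * A^3), (2 + (-1) * A + ((-1) + 1 * omega) * A^2 + (-1) * omega * A^3), (((-2) + (-2) * omega) + ((-2) + (-2) * omega) * A^3)]) u0 = ((-2) + (-1) * A + ((-1) + (-3) * omega) * A^2 + (-1) * omega * A^3)"
    unfolding herm_def mdefs using A0 by (simp add: cnj_omega AA field_simps algebra_simps eval_nat_numeral om1 om2)
  have Y3: "refl u0 (vector [(2 + A + (1 + 3 * omega) * A^2 + omega * A^3), (2 + (-1) * A + ((-1) + 1 * omega) * A^2 + (-1) * omega * A^3), (((-2) + (-2) * omega) + ((-2) + (-2) * omega) * A^3)]) = vector [(2 + A + (1 + 3 * omega) * A^2 + omega * A^3), ((-2) + A + (1 + (-1) * omega) * A^2 + omega * A^3), ((2 + 2 * omega) + (2 + 2 * omega) * A^3)]"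
    by (rule refl_eqI[OF h_u0u0 _ k3], simp, rule vec3_eqI; use A0 in \<open>simp add: mdefs field_simps algebra_simps eval_nat_numeral om1 om2\<close>)
  have "omega^2 *s (vector [(2 + A + (1 + 3 * omega) * A^2 + omega * A^3), ((-2) + A + (1 + (-1) * omega) * A^2 + omega * A^3), ((2 + 2 * omega) + (2 + 2 * omega) * A^3)]) = 1 *s s0v A"
    by (rule vec3_eqI; use A0 in \<open>simp add: mdefs field_simps algebra_simps eval_nat_numeral om1 om2\<close>)
  then show ?thesis using Y1 Y2 Y3 by simp
qed
lemma eig_za: assumes AA: "cnj A = A" and A0: "A \<noteq> 0" and A1: "A \<noteq> 1" and A2: "A \<noteq> -1"
  shows "omega^2 *s refl u0 (refl (v0 A) (refl (p1v A) (zav A))) = A *s zav A"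
proof -
  have n1: "8 * (1 - A^2)^2 \<noteq> 0" 
  proof -
    have "1 - A^2 = (1 - A) * (1 + A)" by (simp add: algebra_simps power2_eq_square)
    moreover have "1 - A \<noteq> 0" "1 + A \<noteq> 0" using A1 A2 by (auto simp: add_eq_0_iff)
    ultimately show ?thesis by simp
  qed
  have k1: "herm (zav A) (p1v A) = (((-4) + (-4) * omega) + 4 * A + (8 + 8 * omega) * A^2 + (-8) * A^3 + ((-4) + (-4) * omega) * A^4 + 4 * A^5)"
    unfolding herm_def mdefs by (simp add: cnj_omega AA algebra_simps eval_nat_numeral om1 om2)
  have Y1: "refl (p1v A) (zav A) = vector [((1 + 1 * omega) + 2 * A^2 + (1 + 3 * omega) * A^3), ((1 + 1 * omega) + (-2) * A^2 + (1 + (-1) * omega) * A^3), (2 * omega * A + (2 + 2 * omega) * A^2 + 2 * A^3)]"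
    by (rule refl_eqI[OF h_p1p1[OF AA] n1 k1], rule vec3_eqI; simp add: mdefs algebra_simps eval_nat_numeral om1 om2)
  have k2: "herm (vector [((1 + 1 * omega) + 2 * A^2 + (1 + 3 * omega) * A^3), ((1 + 1 * omega) + (-2) * A^2 + (1 + (-1) * omega) * A^3), (2 * omega * A + (2 + 2 * omega) * A^2 + 2 * A^3)]) (v0 A) = (((-2) + (-2) * omega) * A + (-4) * A^2 + (-4) * omega * A^3 + ((-2) + (-2) * omega) * A^4)"
    unfolding herm_def mdefs by (simp add: cnj_omega AA algebra_simps eval_nat_numeral om1 om2)
  have n2: "- 4 * A \<noteq> 0" using A0 by simp
  have Y2: "refl (v0 A) (vector [((1 + 1 * omega) + 2 * A^2 + (1 + 3 * omega) * A^3), ((1 + 1 * omega) + (-2) * A^2 + (1 + (-1) * omega) * A^3), (2 * omega * A + (2 + 2 * omega) * A^2 + 2 * A^3)]) = vector [((3 + 1 * omega) * A + 2 * omega * A^2 + (1 + 1 * omega) * A^4), ((1 + (-1) * omega) * A + 2 * omega * A^2 + ((-1) + (-1) * omega) * A^4), ((-2) * omega * A + ((-2) + (-2) * omega) * A^2 + (-2) * A^3)]"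
    by (rule refl_eqI[OF h_v0v0[OF AA] n2 k2], rule vec3_eqI; use A0 in \<open>simp add: mdefs field_simps algebra_simps eval_nat_numeral om1 om2\<close>)
  have k3: "herm (vector [((3 + 1 * omega) * A + 2 * omega * A^2 + (1 + 1 * omega) * A^4), ((1 + (-1) * omega) * A + 2 * omega * A^2 + ((-1) + (-1) * omega) * A^4), ((-2) * omega * A + ((-2) + (-2) * omega) * A^2 + (-2) * A^3)]) u0 = (((-3) + (-1) * omega) * A + (-2) * omega * A^2 + ((-1) + (-1) * omega) * A^4)"
    unfolding herm_def mdefs using A0 by (simp add: cnj_omega AA field_simps algebra_simps eval_nat_numeral om1 om2)
  have Y3: "refl u0 (vector [((3 + 1 * omega) * A + 2 * omega * A^2 + (1 + 1 * omega) * A^4), ((1 + (-1) * omega) * A + 2 * omega * A^2 + ((-1) + (-1) * omega) * A^4), ((-2) * omega * A + ((-2) + (-2) * omega) * A^2 + (-2) * A^3)]) = vector [((3 + 1 * omega) * A + 2 * omega * A^2 + (1 + 1 * omega) * A^4), (((-1) + 1 * omega) * A + (-2) * omega * A^2 + (1 + 1 * omega) * A^4), (2 * omega * A + (2 + 2 * omega) * A^2 + 2 * A^3)]"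
    by (rule refl_eqI[OF h_u0u0 _ k3], simp, rule vec3_eqI; use A0 in \<open>simp add: mdefs field_simps algebra_simps eval_nat_numeral om1 om2\<close>)
  have "omega^2 *s (vector [((3 + 1 * omega) * A + 2 * omega * A^2 + (1 + 1 * omega) * A^4), (((-1) + 1 * omega) * A + (-2) * omega * A^2 + (1 + 1 * omega) * A^4), (2 * omega * A + (2 + 2 * omega) * A^2 + 2 * A^3)]) = A *s zav A"
    by (rule vec3_eqI; use A0 in \<open>simp add: mdefs field_simps algebra_simps eval_nat_numeral om1 om2\<close>)
  then show ?thesis using Y1 Y2 Y3 by simp
qed
lemma eig_zb: assumes AA: "cnj A = A" and A0: "A \<noteq> 0" and A1: "A \<noteq> 1" and A2: "A \<noteq> -1"
  shows "omega^2 *s refl u0 (refl (v0 A) (refl (p1v A) (zbv A))) = (1/A) *s zbv A"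
proof -
  have n1: "8 * (1 - A^2)^2 \<noteq> 0" 
  proof -
    have "1 - A^2 = (1 - A) * (1 + A)" by (simp add: algebra_simps power2_eq_square)
    moreover have "1 - A \<noteq> 0" "1 + A \<noteq> 0" using A1 A2 by (auto simp: add_eq_0_iff)
    ultimately show ?thesis by simp
  qed
  have k1: "herm (zbv A) (p1v A) = (4 * omega + (4 + (-8) * omega) * A^2 + ((-8) + 4 * omega) * A^4 + 4 * A^6)"
    unfolding herm_def mdefs by (simp add: cnj_omega AA algebra_simps eval_nat_numeral om1 om2)
  have Y1: "refl (p1v A) (zbv A) = vector [(((-3) + (-1) * omega) + (-1) * A + (2 + 1 * omega) * A^2 + (-2) * A^4), ((1 + (-1) * omega) + (-1) * A + ((-2) + 1 * omega) * A^2 + 2 * A^4), (((-2) + (-2) * omega) + ((-2) + (-2) * omega) * A + 2 * omega * A^2 + 2 * omega * A^3)]"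
    by (rule refl_eqI[OF h_p1p1[OF AA] n1 k1], rule vec3_eqI; simp add: mdefs algebra_simps eval_nat_numeral om1 om2)
  have k2: "herm (vector [(((-3) + (-1) * omega) + (-1) * A + (2 + 1 * omega) * A^2 + (-2) * A^4), ((1 + (-1) * omega) + (-1) * A + ((-2) + 1 * omega) * A^2 + 2 * A^4), (((-2) + (-2) * omega) + ((-2) + (-2) * omega) * A + 2 * omega * A^2 + 2 * omega * A^3)]) (v0 A) = (4 + (2 + 2 * omega) * A + (-2) * A^2 + (-2) * omega * A^3 + 4 * A^4)"
    unfolding herm_def mdefs by (simp add: cnj_omega AA algebra_simps eval_nat_numeral om1 om2)
  have n2: "- 4 * A \<noteq> 0" using A0 by simp
  have Y2: "refl (v0 A) (vector [(((-3) + (-1) * omega) + (-1) * A + (2 + 1 * omega) * A^2 + (-2) * A^4), ((1 + (-1) * omega) + (-1) * A + ((-2) + 1 * omega) * A^2 + 2 * A^4), (((-2) + (-2) * omega) + ((-2) + (-2) * omega) * A + 2 * omega * A^2 + 2 * omega * A^3)]) = vector [(((-2) + (1 + (-1) * omega) * A^2 + (-1) * A^3 + ((-2) + 1 * omega) * A^4) / (A)), (((-2) + (3 + 1 * omega) * A^2 + A^3 + ((-2) + (-1) * omega) * A^4) / (A)), ((2 + 2 * omega) + (2 + 2 * omega) * A + (-2) * omega * A^2 + (-2) * omega * A^3)]"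
    by (rule refl_eqI[OF h_v0v0[OF AA] n2 k2], rule vec3_eqI; use A0 in \<open>simp add: mdefs field_simps algebra_simps eval_nat_numeral om1 om2\<close>)
  have k3: "herm (vector [(((-2) + (1 + (-1) * omega) * A^2 + (-1) * A^3 + ((-2) + 1 * omega) * A^4) / (A)), (((-2) + (3 + 1 * omega) * A^2 + A^3 + ((-2) + (-1) * omega) * A^4) / (A)), ((2 + 2 * omega) + (2 + 2 * omega) * A + (-2) * omega * A^2 + (-2) * omega * A^3)]) u0 = ((2 + ((-1) + 1 * omega) * A^2 + A^3 + (2 + (-1) * omega) * A^4) / (A))"
    unfolding herm_def mdefs using A0 by (simp add: cnj_omega AA field_simps algebra_simps eval_nat_numeral om1 om2)
  have Y3: "refl u0 (vector [(((-2) + (1 + (-1) * omega) * A^2 + (-1) * A^3 + ((-2) + 1 * omega) * A^4) / (A)), (((-2) + (3 + 1 * omega) * A^2 + A^3 + ((-2) + (-1) * omega) * A^4) / (A)), ((2 + 2 * omega) + (2 + 2 * omega) * A + (-2) * omega * A^2 + (-2) * omega * A^3)]) = vector [(((-2) + (1 + (-1) * omega) * A^2 + (-1) * A^3 + ((-2) + 1 * omega) * A^4) / (A)), ((2 + ((-3) + (-1) * omega) * A^2 + (-1) * A^3 + (2 + 1 * omega) * A^4) / (A)), (((-2) + (-2) * omega) + ((-2) + (-2) * omega) * A + 2 * omega * A^2 + 2 * omega * A^3)]"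
    by (rule refl_eqI[OF h_u0u0 _ k3], simp, rule vec3_eqI; use A0 in \<open>simp add: mdefs field_simps algebra_simps eval_nat_numeral om1 om2\<close>)
  have "omega^2 *s (vector [(((-2) + (1 + (-1) * omega) * A^2 + (-1) * A^3 + ((-2) + 1 * omega) * A^4) / (A)), ((2 + ((-3) + (-1) * omega) * A^2 + (-1) * A^3 + (2 + 1 * omega) * A^4) / (A)), (((-2) + (-2) * omega) + ((-2) + (-2) * omega) * A + 2 * omega * A^2 + 2 * omega * A^3)]) = (1/A) *s zbv A"
    by (rule vec3_eqI; use A0 in \<open>simp add: mdefs field_simps algebra_simps eval_nat_numeral om1 om2\<close>)
  then show ?thesis using Y1 Y2 Y3 by simp
qed
lemma span_model: assumes AA: "cnj A = A"
  shows "(4 * (A - 1)^4 * (A + 1)^3) *s c = ((A + 1) * herm c (s0v A)) *s s0v A - (omega * herm c (zbv A)) *s zav A - (omega^2 * herm c (zav A)) *s zbv A"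
  by (rule vec3_eqI; simp add: herm_def mdefs cnj_omega AA algebra_simps eval_nat_numeral om1 om2)


lemma refl_diff: "refl p (x - y) = refl p x - refl p y"
  unfolding refl_def by (simp add: herm_diff_left vec_eq_iff diff_divide_distrib algebra_simps)

lemma h_p2p2: assumes AA: "cnj A = A" shows "herm (p2v A) (p2v A) = - 8 * (A - 1)^4 * (A + 1)^3"
  unfolding herm_def p2v_def mdefs by (simp add: cnj_omega AA algebra_simps eval_nat_numeral om1 om2)
lemma h_p3p3: assumes AA: "cnj A = A" shows "herm (p3v A) (p3v A) = - 8 * A * (A - 1)^4 * (A + 1)^3"
  unfolding herm_def p3v_def mdefs by (simp add: cnj_omega AA algebra_simps eval_nat_numeral om1 om2)

lemma nz_pm: "A \<noteq> 1 \<Longrightarrow> A \<noteq> -1 \<Longrightarrow> A - 1 \<noteq> 0 \<and> A + 1 \<noteq> (0::complex)"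
  by (metis eq_iff_diff_eq_0 eq_neg_iff_add_eq_0)

lemma model_main:
  assumes AA: "cnj A = A" and A0: "A \<noteq> 0" and A1: "A \<noteq> 1" and A2: "A \<noteq> -1"
  shows "refl (v0 A) (refl u0 (refl (p3v A) (refl (p2v A) (refl (p1v A) c)))) = omega^2 *s c"
proof -
  define \<Phi> where "\<Phi> x = refl (p3v A) (refl (p2v A) x)" for x
  define \<Psi> where "\<Psi> x = omega^2 *s refl u0 (refl (v0 A) (refl (p1v A) x))" for x
  have \<Phi>lin: "\<Phi> (k *s x - l *s y - m *s z) = k *s \<Phi> x - l *s \<Phi> y - m *s \<Phi> z" for k l m x y z
    unfolding \<Phi>_def by (simp add: refl_diff refl_scale)
  have \<Psi>lin: "\<Psi> (k *s x - l *s y - m *s z) = k *s \<Psi> x - l *s \<Psi> y - m *s \<Psi> z" for k l m x y z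
    unfolding \<Psi>_def refl_diff refl_scale by (simp add: vec_eq_iff algebra_simps)
  have \<Phi>sc: "\<Phi> (k *s x) = k *s \<Phi> x" for k x unfolding \<Phi>_def by (simp add: refl_scale)
  have \<Psi>sc: "\<Psi> (k *s x) = k *s \<Psi> x" for k x unfolding \<Psi>_def by (simp add: refl_scale vec_eq_iff algebra_simps)
  define r where "r = - 4 * (A - 1)^4 * (A + 1)^3"
  have cw2: "cnj (omega^2) = omega" by (simp add: cnj_omega eval_nat_numeral om1 algebra_simps)
  have r: "herm (zav A) (omega^2 *s zbv A) = r"
    unfolding r_def herm_scale_right h_zazb[OF AA] cw2 by (simp add: eval_nat_numeral algebra_simps om1 om2)
  have rr: "cnj r = r" unfolding r_def by (simp add: AA)
  define E where "E = 4 * (A - 1)^4 * (A + 1)^3"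
  have E0: "E \<noteq> 0" unfolding E_def using nz_pm[OF A1 A2] by simp
  have r0: "r \<noteq> 0" using E0 unfolding r_def E_def by simp
  have g0: "omega^2 \<noteq> 0" using om1 by (auto simp: eval_nat_numeral)
  note R = R32[OF h_zaza[OF AA] h_zbzb[OF AA] r rr r0 AA A0 g0]
  have e1: "\<Phi> (s0v A) = \<Psi> (s0v A)"
    unfolding \<Phi>_def \<Psi>_def p2v_def p3v_def eig_s0[OF AA A0 A1 A2]
    using R(3)[OF h_s0za[OF AA] h_s0zb[OF AA]] by simp
  have e2: "\<Phi> (zav A) = \<Psi> (zav A)"
    unfolding \<Phi>_def \<Psi>_def p2v_def p3v_def eig_za[OF AA A0 A1 A2] using R(1) by simp
  have e3: "\<Phi> (zbv A) = \<Psi> (zbv A)"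
    unfolding \<Phi>_def \<Psi>_def p2v_def p3v_def eig_zb[OF AA A0 A1 A2] using R(2) by simp
  have all: "\<Phi> d = \<Psi> d" for d
  proof -
    have "E *s \<Phi> d = \<Phi> (E *s d)" by (simp add: \<Phi>sc)
    also have "\<dots> = \<Psi> (E *s d)"
      unfolding E_def span_model[OF AA] \<Phi>lin \<Psi>lin e1 e2 e3 ..
    also have "\<dots> = E *s \<Psi> d" by (simp add: \<Psi>sc)
    finally show ?thesis by (rule smult_cancel[OF E0])
  qed
  have p1n: "herm (p1v A) (p1v A) \<noteq> 0"
  proof -
    have "1 - A^2 = (1 - A) * (1 + A)" by (simp add: algebra_simps power2_eq_square)
    moreover have "1 - A \<noteq> 0" "1 + A \<noteq> 0" using A1 A2 by (auto simp: add_eq_0_iff)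
    ultimately show ?thesis unfolding h_p1p1[OF AA] by simp
  qed
  have v0n: "herm (v0 A) (v0 A) \<noteq> 0" using A0 h_v0v0[OF AA] by simp
  have u0n: "herm u0 u0 \<noteq> 0" using h_u0u0 by simp
  have "\<Phi> (refl (p1v A) c) = omega^2 *s refl u0 (refl (v0 A) c)"
    using all[of "refl (p1v A) c"] unfolding \<Psi>_def refl_invol[OF p1n] .
  then have "refl (v0 A) (refl u0 (\<Phi> (refl (p1v A) c))) = omega^2 *s c"
    by (simp add: refl_scale refl_invol[OF u0n] refl_invol[OF v0n])
  then show ?thesis unfolding \<Phi>_def .
qed



lemma real_perp:
  fixes W1 W2 W3 P1 P2 P3 :: real
  assumes nn: "W1 \<ge> 0" "W2 \<ge> 0" "W3 \<ge> 0" "P1 \<ge> 0" "P2 \<ge> 0" "P3 \<ge> 0"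
    and t: "W1 * P1 \<le> W2 * P2 + W3 * P3" and w: "W1^2 \<ge> W2^2 + W3^2" and p: "P1^2 > P2^2 + P3^2"
  shows "W1 = 0 \<and> W2 = 0 \<and> W3 = 0"
proof -
  have cs: "(W2 * P2 + W3 * P3)^2 \<le> (W2^2 + W3^2) * (P2^2 + P3^2)"
  proof -
    have "0 \<le> (W2 * P3 - W3 * P2)^2" by simp
    then show ?thesis by (simp add: power2_eq_square algebra_simps)
  qed
  have sq: "(W1 * P1)^2 \<le> (W2 * P2 + W3 * P3)^2"
    using t nn by (intro power_mono) auto
  have W23: "W2^2 + W3^2 = 0"
  proof (rule ccontr)
    assume "W2^2 + W3^2 \<noteq> 0"
    then have pos: "W2^2 + W3^2 > 0" by (simp add: add_nonneg_nonneg order_le_neq_trans)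
    have "(W2^2 + W3^2) * (P2^2 + P3^2) < (W2^2 + W3^2) * P1^2"
      using pos p by simp
    also have "\<dots> \<le> W1^2 * P1^2" using w by (simp add: mult_right_mono)
    also have "\<dots> = (W1 * P1)^2" by (simp add: power_mult_distrib)
    finally show False using sq cs by linarith
  qed
  then have "W2 = 0" "W3 = 0" using nn by (simp_all add: add_nonneg_nonneg sum_power2_eq_zero_iff)
  moreover have "P1 > 0" using p nn
    by (metis add_nonneg_nonneg not_less power2_less_imp_less zero_le_power2 zero_less_power2 less_le)
  ultimately show ?thesis using t nn by (simp add: mult_le_0_iff)
qed

lemma re_herm_self: "Re (herm x x) = (cmod (x$2))^2 + (cmod (x$3))^2 - (cmod (x$1))^2"
  unfolding herm_def by (simp add: complex_mult_cnj cmod_power2)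

lemma perp_neg:
  assumes p: "Re (herm p p) < 0" and wp: "herm w p = 0"
  shows "w = 0 \<or> Re (herm w w) > 0"
proof (rule disjCI)
  assume nw: "\<not> Re (herm w w) > 0"
  have e: "w$1 * cnj (p$1) = w$2 * cnj (p$2) + w$3 * cnj (p$3)"
    using wp unfolding herm_def by (simp add: algebra_simps eq_neg_iff_add_eq_0)
  have "cmod (w$1) * cmod (p$1) = cmod (w$2 * cnj (p$2) + w$3 * cnj (p$3))"
    by (metis e norm_mult complex_mod_cnj)
  also have "\<dots> \<le> cmod (w$2) * cmod (p$2) + cmod (w$3) * cmod (p$3)"
    by (metis norm_triangle_ineq norm_mult complex_mod_cnj)
  finally have t: "cmod (w$1) * cmod (p$1) \<le> cmod (w$2) * cmod (p$2) + cmod (w$3) * cmod (p$3)" .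
  have "cmod (w$1) = 0 \<and> cmod (w$2) = 0 \<and> cmod (w$3) = 0"
    by (rule real_perp[OF _ _ _ _ _ _ t]) (use nw p in \<open>auto simp: re_herm_self\<close>)
  then show "w = 0" by (simp add: vec_eq_iff forall_3)
qed



definition Gf :: "complex^3 \<Rightarrow> complex^3 \<Rightarrow> complex^3 \<Rightarrow> complex^3 \<Rightarrow> complex^3" where
  "Gf f0 f1 f2 c = c$1 *s f0 + c$2 *s f1 + c$3 *s f2"

definition ON :: "complex^3 \<Rightarrow> complex^3 \<Rightarrow> complex^3 \<Rightarrow> bool" where
  "ON f0 f1 f2 \<longleftrightarrow> herm f0 f0 = -1 \<and> herm f1 f1 = 1 \<and> herm f2 f2 = 1 \<and>
     herm f0 f1 = 0 \<and> herm f0 f2 = 0 \<and> herm f1 f2 = 0"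

lemma ON_all: assumes "ON f0 f1 f2"
  shows "herm f0 f0 = -1" "herm f1 f1 = 1" "herm f2 f2 = 1" "herm f0 f1 = 0" "herm f0 f2 = 0" "herm f1 f2 = 0"
    "herm f1 f0 = 0" "herm f2 f0 = 0" "herm f2 f1 = 0"
  using assms unfolding ON_def by (auto intro: herm_swap[THEN trans])

lemma Gf_herm: assumes "ON f0 f1 f2" shows "herm (Gf f0 f1 f2 c) (Gf f0 f1 f2 d) = herm c d"
  unfolding Gf_def using ON_all[OF assms]
  by (simp add: herm_simps) (simp add: herm_def algebra_simps)

lemma Gf_lin: "Gf f0 f1 f2 (k *s x - y) = k *s Gf f0 f1 f2 x - Gf f0 f1 f2 y"
  unfolding Gf_def by (simp add: vec_eq_iff algebra_simps)

lemma refl_Gf: assumes "ON f0 f1 f2" shows "refl (Gf f0 f1 f2 p) (Gf f0 f1 f2 x) = Gf f0 f1 f2 (refl p x)"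
  unfolding refl_def Gf_herm[OF assms] Gf_lin ..

lemma Gf_surj: assumes on: "ON f0 f1 f2" shows "\<exists>c. x = Gf f0 f1 f2 c"
proof -
  define col where "col j = (if j = (1::3) then f0 else if j = 2 then f1 else f2)" for j
  define eps where "eps j = (if j = (1::3) then -1 else (1::complex))" for j
  define sg where "sg j = (if j = (1::3) then -1 else (1::complex))" for j
  define M :: "complex^3^3" where "M = (\<chi> i j. col j $ i)"
  define N :: "complex^3^3" where "N = (\<chi> i j. sg i * eps j * cnj (col i $ j))"
  have hs: "(\<Sum>j\<in>UNIV. eps j * cnj (f $ j) * g $ j) = herm g f" for f g
    unfolding herm_def eps_def by (simp add: sum_3 algebra_simps)
  have NM: "(N ** M) $ i $ k = sg i * herm (col k) (col i)" for i k
  proof -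
    have "(N ** M) $ i $ k = (\<Sum>j\<in>UNIV. sg i * (eps j * cnj (col i $ j) * col k $ j))"
      unfolding matrix_matrix_mult_def N_def M_def by (simp add: algebra_simps)
    also have "\<dots> = sg i * herm (col k) (col i)" by (simp add: sum_distrib_left[symmetric] hs)
    finally show ?thesis .
  qed
  have "N ** M = mat 1"
    unfolding vec_eq_iff mat_def
    by (simp add: NM forall_3 col_def sg_def ON_all[OF on])
  then have "M ** N = mat 1" using matrix_left_right_inverse by blast
  then have "x = M *v (N *v x)" by (simp add: matrix_vector_mul_assoc)
  also have "M *v (N *v x) = Gf f0 f1 f2 (N *v x)"
    unfolding M_def Gf_def matrix_vector_mult_def by (simp add: vec_eq_iff sum_3 col_def algebra_simps)
  finally show ?thesis by blast
qed

definition cross3 :: "complex^3 \<Rightarrow> complex^3 \<Rightarrow> complex^3" where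
  "cross3 f g = vector [cnj (f$2) * cnj (g$3) - cnj (f$3) * cnj (g$2),
                         - cnj (f$3) * cnj (g$1) + cnj (f$1) * cnj (g$3),
                         - cnj (f$1) * cnj (g$2) + cnj (f$2) * cnj (g$1)]"

lemma cross3_1: "herm (cross3 f g) f = 0"
  unfolding cross3_def herm_def by (simp add: algebra_simps)
lemma cross3_2: "herm (cross3 f g) g = 0"
  unfolding cross3_def herm_def by (simp add: algebra_simps)
lemma cross3_3: "herm (cross3 f g) (cross3 f g) = herm f g * herm g f - herm f f * herm g g"
  unfolding cross3_def herm_def by (simp add: algebra_simps)



theorem mainTheorem7:
  fixes p4 p5 :: "complex^3"
  assumes "negative p4" and "negative p5" and "\<not> same_point p4 p5"
  shows "\<exists>p1 p2 p3 :: complex^3. positive p1 \<and> negative p2 \<and> negative p3 \<and>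
           (\<forall>x. refl p5 (refl p4 (refl p3 (refl p2 (refl p1 x)))) = (omega^2) *s x)"
proof -
  have n4: "Re (herm p4 p4) < 0" and n5: "Re (herm p5 p5) < 0"
    using assms(1,2) unfolding negative_def by auto
  define s4 where "s4 = sqrt (- Re (herm p4 p4))"
  have s4p: "s4 > 0" unfolding s4_def using n4 by simp
  have s4sq: "s4^2 = - Re (herm p4 p4)" unfolding s4_def using n4 by simp
  define f0 where "f0 = (1 / complex_of_real s4) *s p4"
  have f0f0: "herm f0 f0 = -1"
  proof -
    have "herm f0 f0 = complex_of_real (Re (herm p4 p4) / s4^2)"
      unfolding f0_def herm_scale_left herm_scale_right
      by (subst herm_self_ofreal) (simp add: power2_eq_square)
    also have "\<dots> = -1" using s4sq s4p n4 by simp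
    finally show ?thesis .
  qed
  have p4f0: "p4 = complex_of_real s4 *s f0" unfolding f0_def using s4p by (simp add: vec_eq_iff)
  define \<beta> where "\<beta> = herm p5 f0"
  define w where "w = p5 + \<beta> *s f0"
  have wf0: "herm w f0 = 0" unfolding w_def \<beta>_def by (simp add: herm_simps f0f0)
  have f0w: "herm f0 w = 0" using wf0 herm_swap by (metis complex_cnj_zero)
  have w0: "w \<noteq> 0"
  proof
    assume "w = 0"
    then have "p5 = (- \<beta> / complex_of_real s4) *s p4"
      unfolding w_def f0_def by (simp add: vec_eq_iff eq_neg_iff_add_eq_0 algebra_simps)
    then show False using assms(3) unfolding same_point_def by blast
  qed
  have ww: "Re (herm w w) > 0" using perp_neg[of f0 w] f0f0 wf0 w0 by simp
  have b0: "\<beta> \<noteq> 0"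
  proof
    assume "\<beta> = 0"
    then have "p5 = 0 \<or> Re (herm p5 p5) > 0" using perp_neg[of f0 p5] f0f0 unfolding \<beta>_def by simp
    then show False using n5 by (auto simp: herm_def)
  qed
  define \<rho> where "\<rho> = cmod \<beta>"
  define \<sigma> where "\<sigma> = sqrt (Re (herm w w))"
  have rp: "\<rho> > 0" unfolding \<rho>_def using b0 by simp
  have sp: "\<sigma> > 0" unfolding \<sigma>_def using ww by simp
  have wwr: "herm w w = complex_of_real (\<sigma>^2)" unfolding \<sigma>_def using ww
    by (subst herm_self_ofreal) simp
  have bb: "\<beta> * cnj \<beta> = complex_of_real (\<rho>^2)" unfolding \<rho>_def by (rule complex_norm_square[symmetric])
  have p5w: "p5 = w - \<beta> *s f0" unfolding w_def by simp
  have "herm p5 p5 = herm w w - \<beta> * cnj \<beta>"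
    unfolding p5w by (simp add: herm_simps wf0 f0w f0f0 algebra_simps)
  then have "Re (herm p5 p5) = \<sigma>^2 - \<rho>^2" using wwr bb by simp
  then have "\<sigma>^2 < \<rho>^2" using n5 by simp
  then have sr: "\<sigma> < \<rho>" using rp sp by (simp add: power_less_imp_less_base less_imp_le)
  define f1 where "f1 = (cnj \<beta> / complex_of_real (\<rho> * \<sigma>)) *s w"
  have f1f1: "herm f1 f1 = 1"
    unfolding f1_def herm_scale_left herm_scale_right wwr using rp sp bb
    by (simp add: field_simps power2_eq_square)
  have f0f1: "herm f0 f1 = 0" unfolding f1_def by (simp add: herm_simps f0w)
  define f2 where "f2 = cross3 f0 f1"
  have f1f0: "herm f1 f0 = 0" using f0f1 herm_swap by (metis complex_cnj_zero)
  have f2f2: "herm f2 f2 = 1" unfolding f2_def cross3_3 f0f1 f1f0 f0f0 f1f1 by simp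
  have f2f0: "herm f2 f0 = 0" unfolding f2_def by (rule cross3_1)
  have f2f1: "herm f2 f1 = 0" unfolding f2_def by (rule cross3_2)
  have on: "ON f0 f1 f2" unfolding ON_def using f0f0 f1f1 f2f2 f0f1 f2f0 f2f1 herm_swap
    by (metis complex_cnj_zero)
  define a where "a = (\<rho> + \<sigma>) / (\<rho> - \<sigma>)"
  have a1: "a > 1" unfolding a_def using sr sp by (simp add: field_simps)
  define A where "A = complex_of_real a"
  have AA: "cnj A = A" unfolding A_def by simp
  have A0: "A \<noteq> 0" and A1: "A \<noteq> 1" and A2: "A \<noteq> -1" unfolding A_def using a1 by (auto simp: complex_eq_iff)
  let ?G = "Gf f0 f1 f2"
  have Gu: "?G u0 = f0" unfolding Gf_def u0_def by (simp add: vec_eq_iff)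
  have Gv: "?G (v0 A) = (1 + A) *s f0 + (1 - A) *s f1" unfolding Gf_def v0_def by (simp add: vec_eq_iff)
  define k where "k = - (\<beta> / complex_of_real \<rho>) * complex_of_real ((\<rho> - \<sigma>) / 2)"
  have k0: "k \<noteq> 0" unfolding k_def using b0 rp sr by simp
  have wf1: "w = (complex_of_real \<sigma> * \<beta> / complex_of_real \<rho>) *s f1"
  proof -
    have "(complex_of_real \<sigma> * \<beta> / complex_of_real \<rho>) * (cnj \<beta> / complex_of_real (\<rho> * \<sigma>)) = 1"
      using bb rp sp by (simp add: field_simps power2_eq_square)
    then show ?thesis unfolding f1_def by (simp add: vec_eq_iff mult.assoc[symmetric])
  qed
  have ka1: "k * (1 + A) = - \<beta>" unfolding k_def A_def a_def using rp sr
    by (simp add: field_simps)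
  have ka2: "k * (1 - A) = complex_of_real \<sigma> * \<beta> / complex_of_real \<rho>" unfolding k_def A_def a_def using rp sr
    by (simp add: field_simps)
  have p5G: "p5 = k *s ?G (v0 A)"
  proof -
    have "k *s ((1 + A) *s f0 + (1 - A) *s f1) = (k*(1+A)) *s f0 + (k*(1-A)) *s f1"
      by (simp add: vec_eq_iff algebra_simps)
    also have "\<dots> = (- \<beta>) *s f0 + (complex_of_real \<sigma> * \<beta> / complex_of_real \<rho>) *s f1"
      unfolding ka1 ka2 ..
    also have "\<dots> = p5" unfolding p5w wf1 by (simp add: vec_eq_iff)
    finally show ?thesis unfolding Gv by simp
  qed
  have p4G: "p4 = complex_of_real s4 *s ?G u0" unfolding Gu by (rule p4f0)
  have R5: "refl p5 y = refl (?G (v0 A)) y" for y unfolding p5G by (rule refl_smult_point[OF k0])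
  have R4: "refl p4 y = refl (?G u0) y" for y unfolding p4G using s4p by (intro refl_smult_point) simp
  show ?thesis
  proof (intro exI conjI allI)
    have Aexp: "8 * (1 - A^2)^2 = complex_of_real (8 * (1 - a^2)^2)"
      "- 8 * (A - 1)^4 * (A + 1)^3 = complex_of_real (- 8 * (a - 1)^4 * (a + 1)^3)"
      "- 8 * A * (A - 1)^4 * (A + 1)^3 = complex_of_real (- 8 * a * (a - 1)^4 * (a + 1)^3)"
      unfolding A_def by simp_all
    have "Re (herm (?G (p1v A)) (?G (p1v A))) = 8 * (1 - a^2)^2"
      unfolding Gf_herm[OF on] h_p1p1[OF AA] unfolding Aexp by (simp only: Re_complex_of_real)
    moreover have "(1 - a^2)^2 > 0"
    proof -
      have "a^2 > 1" using a1 by (simp add: one_less_power)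
      then have "1 - a^2 \<noteq> 0" by simp
      then show ?thesis by simp
    qed
    ultimately show "positive (?G (p1v A))" unfolding positive_def by simp
    have "Re (herm (?G (p2v A)) (?G (p2v A))) = - 8 * (a - 1)^4 * (a + 1)^3"
      unfolding Gf_herm[OF on] h_p2p2[OF AA] unfolding Aexp by (simp only: Re_complex_of_real)
    moreover have "(a - 1)^4 * (a + 1)^3 > 0" using a1 by simp
    ultimately show "negative (?G (p2v A))" unfolding negative_def by linarith
    have "Re (herm (?G (p3v A)) (?G (p3v A))) = - 8 * a * (a - 1)^4 * (a + 1)^3"
      unfolding Gf_herm[OF on] h_p3p3[OF AA] unfolding Aexp by (simp only: Re_complex_of_real)
    moreover have "a * (a - 1)^4 * (a + 1)^3 > 0" using a1 by simp
    ultimately show "negative (?G (p3v A))" unfolding negative_def by linarith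
    fix x
    obtain c where xc: "x = ?G c" using Gf_surj[OF on] by blast
    have "refl p5 (refl p4 (refl (?G (p3v A)) (refl (?G (p2v A)) (refl (?G (p1v A)) x))))
        = ?G (refl (v0 A) (refl u0 (refl (p3v A) (refl (p2v A) (refl (p1v A) c)))))"
      unfolding xc R5 R4 refl_Gf[OF on] ..
    also have "\<dots> = ?G (omega^2 *s c)" unfolding model_main[OF AA A0 A1 A2] ..
    also have "\<dots> = omega^2 *s x" unfolding xc Gf_def by (simp add: vec_eq_iff algebra_simps)
    finally show "refl p5 (refl p4 (refl (?G (p3v A)) (refl (?G (p2v A)) (refl (?G (p1v A)) x)))) = omega^2 *s x" .
  qed
qed

end
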